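(* Let $n\ge 3$. The cardinality statistic $I\mapsto|I|$ is not homomesic under rowmotion on $\mathcal{IC}([n])$. More precisely, with $[i,j]=\{i,\dots,j\}$: the orbit $\{\emptyset,[n]\}$ has average cardinality $\frac n2$; for each $1\le k<\frac n2$, the orbit of $[1,k]$ (of size $n+2$) has average cardinality $\frac{2k(n-k)+n}{n+2}$; and, when $n$ is even, the orbit of $[1,\frac n2]$ (of size $\frac{n+2}{2}$) has average cardinality $\frac n2$.
   Context: $[n]$ denotes the chain poset $1<2<\cdots<n$. A subset $I\subseteq P$ of a finite poset is interval-closed if for all $x,y\in I$ and $z\in P$ with $x\le z\le y$ we have $z\in I$; $\mathcal{IC}(P)$ is the set of interval-closed subsets. For $x\in P$ the toggle $t_x$ sends $I$ to $I\triangle\{x\}$ if that is interval-closed and to $I$ otherwise. Rowmotion is $\mathrm{Row}=t_{x_1}\circ\cdots\circ t_{x_N}$, where $(x_1,\dots,x_N)$ is a linear extension of $P$ (toggling from the top down). A statistic is homomesic under rowmotion if its average over every rowmotion orbit is the same constant. *)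

theory Defs
  imports Complex_Main
begin

text \<open>The chain poset [n] is {1..n} with the usual order on nat.\<close>

definition interval_closed :: "nat \<Rightarrow> nat set \<Rightarrow> bool" where
  "interval_closed n I \<longleftrightarrow> I \<subseteq> {1..n} \<and>
     (\<forall>x\<in>I. \<forall>y\<in>I. \<forall>z\<in>{1..n}. x \<le> z \<and> z \<le> y \<longrightarrow> z \<in> I)"

definition IC :: "nat \<Rightarrow> nat set set" where
  "IC n = {I. interval_closed n I}"

definition toggle :: "nat \<Rightarrow> nat \<Rightarrow> nat set \<Rightarrow> nat set" where
  "toggle n x I = (let J = (I - {x}) \<union> ({x} - I) in if J \<in> IC n then J else I)"

text \<open>Rowmotion: Row = t_1 o t_2 o ... o t_n (toggle top-down: t_n applied first),
  for the (unique) linear extension (1,...,n) of the chain.\<close>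
definition row :: "nat \<Rightarrow> nat set \<Rightarrow> nat set" where
  "row n I = fold (toggle n) (rev [1..<n+1]) I"

definition row_orbit :: "nat \<Rightarrow> nat set \<Rightarrow> nat set set" where
  "row_orbit n I = {(row n ^^ k) I | k. True}"

definition orbit_avg :: "nat \<Rightarrow> (nat set \<Rightarrow> real) \<Rightarrow> nat set \<Rightarrow> real" where
  "orbit_avg n f I = (\<Sum>J\<in>row_orbit n I. f J) / real (card (row_orbit n I))"

definition homomesic :: "nat \<Rightarrow> (nat set \<Rightarrow> real) \<Rightarrow> bool" where
  "homomesic n f \<longleftrightarrow> (\<exists>c. \<forall>I\<in>IC n. orbit_avg n f I = c)"

end

theory Submission imports Defs begin

lemma IC_Icc: "1 \<le> a \<Longrightarrow> b \<le> n \<Longrightarrow> {a..b} \<in> IC n"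
  by (auto simp: IC_def interval_closed_def)

lemma IC_empty: "{} \<in> IC n"
  by (auto simp: IC_def interval_closed_def)

lemma notIC: "p \<in> J \<Longrightarrow> q \<in> J \<Longrightarrow> p \<le> z \<Longrightarrow> z \<le> q \<Longrightarrow> 1 \<le> z \<Longrightarrow> z \<le> n \<Longrightarrow> z \<notin> J \<Longrightarrow> J \<notin> IC n"
  unfolding IC_def interval_closed_def using atLeastAtMost_iff by blast

lemma toggle_yes: "(I - {x}) \<union> ({x} - I) = J \<Longrightarrow> J \<in> IC n \<Longrightarrow> toggle n x I = J"
  by (auto simp: toggle_def Let_def)

lemma toggle_no: "(I - {x}) \<union> ({x} - I) = J \<Longrightarrow> J \<notin> IC n \<Longrightarrow> toggle n x I = I"
  by (auto simp: toggle_def Let_def)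

lemma t_up: "a \<le> b \<Longrightarrow> 1 \<le> a \<Longrightarrow> b < n \<Longrightarrow> toggle n (Suc b) {a..b} = {a..Suc b}"
  by (rule toggle_yes[OF _ IC_Icc]) auto

lemma t_down: "x < b \<Longrightarrow> 1 \<le> x \<Longrightarrow> b \<le> n \<Longrightarrow> toggle n x {Suc x..b} = {x..b}"
  by (rule toggle_yes[OF _ IC_Icc]) auto

lemma t_low: "a < b \<Longrightarrow> 1 \<le> a \<Longrightarrow> b \<le> n \<Longrightarrow> toggle n a {a..b} = {Suc a..b}"
  by (rule toggle_yes[OF _ IC_Icc]) auto

lemma t_high: "a < b \<Longrightarrow> 1 \<le> a \<Longrightarrow> b \<le> n \<Longrightarrow> toggle n b {a..b} = {a..b-1}"
  by (rule toggle_yes[OF _ IC_Icc]) auto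

lemma t_single: "1 \<le> a \<Longrightarrow> a \<le> n \<Longrightarrow> toggle n a {a..a} = {}"
  by (rule toggle_yes[OF _ IC_empty]) auto

lemma t_empty: "1 \<le> a \<Longrightarrow> a \<le> n \<Longrightarrow> toggle n a {} = {a..a}"
  by (rule toggle_yes[OF _ IC_Icc]) auto

lemma t_fix_above: "a \<le> b \<Longrightarrow> Suc (Suc b) \<le> x \<Longrightarrow> x \<le> n \<Longrightarrow> toggle n x {a..b} = {a..b}"
proof (rule toggle_no[OF refl])
  assume "a \<le> b" "Suc (Suc b) \<le> x" "x \<le> n"
  then show "{a..b} - {x} \<union> ({x} - {a..b}) \<notin> IC n"
    by (intro notIC[where p=a and q=x and z="Suc b"]) auto
qed

lemma t_fix_below: "a \<le> b \<Longrightarrow> Suc x < a \<Longrightarrow> 1 \<le> x \<Longrightarrow> b \<le> n \<Longrightarrow> toggle n x {a..b} = {a..b}"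
proof (rule toggle_no[OF refl])
  assume "a \<le> b" "Suc x < a" "1 \<le> x" "b \<le> n"
  then show "{a..b} - {x} \<union> ({x} - {a..b}) \<notin> IC n"
    by (intro notIC[where p=x and q=b and z="a - 1"]) auto
qed

lemma t_fix_in: "a < x \<Longrightarrow> x < b \<Longrightarrow> b \<le> n \<Longrightarrow> toggle n x {a..b} = {a..b}"
proof (rule toggle_no[OF refl])
  assume "a < x" "x < b" "b \<le> n"
  then show "{a..b} - {x} \<union> ({x} - {a..b}) \<notin> IC n"
    by (intro notIC[where p=a and q=b and z=x]) auto
qed

definition F :: "nat \<Rightarrow> nat \<Rightarrow> nat set \<Rightarrow> nat set" where
  "F n a I = fold (toggle n) (rev [a..<n+1]) I"

lemma F_step: "a \<le> n \<Longrightarrow> F n a I = toggle n a (F n (Suc a) I)"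
proof -
  assume "a \<le> n"
  then have "[a..<n+1] = a # [Suc a..<n+1]" by (simp add: upt_conv_Cons)
  then show ?thesis unfolding F_def by simp
qed

lemma F_top: "F n (Suc n) I = I"
  unfolding F_def by simp

lemma row_F: "row n I = F n 1 I"
  unfolding F_def row_def by simp

lemma F_empty: "a \<le> Suc n \<Longrightarrow> 1 \<le> a \<Longrightarrow> F n a {} = {a..n}"
proof (induction a rule: inc_induct)
  case base then show ?case by (simp add: F_top)
next
  case (step a)
  then show ?case
    apply (simp add: F_step)
    apply (cases "a = n")
    using t_empty t_down by auto
qed

lemma F_mid: "a \<le> Suc n \<Longrightarrow> 1 \<le> a \<Longrightarrow> 1 \<le> i \<Longrightarrow> i \<le> j \<Longrightarrow> j < n \<Longrightarrow>
  F n a {i..j} = (if Suc j < a then {i..j} else if i < a then {i..Suc j} else {Suc i..Suc j})"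
proof (induction a rule: inc_induct)
  case base then show ?case by (simp add: F_top)
next
  case (step a)
  have "a > Suc j \<or> a = Suc j \<or> (i < a \<and> a \<le> j) \<or> a = i \<or> a < i" by linarith
  then show ?case
  proof (elim disjE)
    assume "a > Suc j" then show ?thesis using step by (simp add: F_step t_fix_above)
  next
    assume "a = Suc j" then show ?thesis using step by (simp add: F_step t_up)
  next
    assume "i < a \<and> a \<le> j" then show ?thesis using step by (simp add: F_step t_fix_in)
  next
    assume "a = i" then show ?thesis using step by (simp add: F_step t_low)
  next
    assume "a < i" then show ?thesis using step by (simp add: F_step t_fix_below)
  qed
qed

lemma F_topint: "a \<le> Suc n \<Longrightarrow> 1 \<le> a \<Longrightarrow> 1 \<le> i \<Longrightarrow> i \<le> n \<Longrightarrow>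
  F n a {i..n} = (if i < a then {i..a-1} else {a..i-1})"
proof (induction a rule: inc_induct)
  case base then show ?case by (simp add: F_top)
next
  case (step a)
  have "a > i \<or> a = i \<or> Suc a = i \<or> Suc a < i" by linarith
  then show ?case
  proof (elim disjE)
    assume "a > i" then show ?thesis using step t_high[of i a n] by (simp add: F_step)
  next
    assume "a = i" then show ?thesis using step t_single[of a n] by (simp add: F_step)
  next
    assume h: "Suc a = i"
    have "F n (Suc a) {i..n} = {}" using step h by simp
    then have "F n a {i..n} = {a..a}" using step t_empty[of a n] by (simp add: F_step)
    then show ?thesis using h[symmetric] by simp
  next
    assume "Suc a < i" then show ?thesis using step t_down[of a "i - 1" n] by (simp add: F_step)
  qed
qed

lemma row_empty: "1 \<le> n \<Longrightarrow> row n {} = {1..n}"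
  by (simp add: row_F F_empty)

lemma row_mid: "1 \<le> i \<Longrightarrow> i \<le> j \<Longrightarrow> j < n \<Longrightarrow> row n {i..j} = {Suc i..Suc j}"
  using F_mid[of 1 n i j] by (simp add: row_F)

lemma row_topint: "1 \<le> i \<Longrightarrow> i \<le> n \<Longrightarrow> row n {i..n} = {1..i-1}"
  using F_topint[of 1 n i] by (simp add: row_F)


lemma funpow_period: "(f ^^ p) x = x \<Longrightarrow> (f ^^ (p * q)) x = x"
proof (induction q)
  case 0 then show ?case by simp
next
  case (Suc q)
  have "(f ^^ (p * Suc q)) x = (f ^^ p) ((f ^^ (p * q)) x)"
    by (simp add: funpow_add)
  then show ?case using Suc by simp
qed

lemma orbit_period: "0 < p \<Longrightarrow> (f ^^ p) x = x \<Longrightarrow> {(f ^^ k) x | k. True} = (\<lambda>k. (f ^^ k) x) ` {..<p}"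
proof (intro equalityI subsetI)
  fix y assume p: "0 < p" "(f ^^ p) x = x" and "y \<in> {(f ^^ k) x | k. True}"
  then obtain k where y: "y = (f ^^ k) x" by auto
  have "k = k mod p + p * (k div p)" by simp
  then have "(f ^^ k) x = (f ^^ (k mod p)) ((f ^^ (p * (k div p))) x)"
    by (metis funpow_add comp_apply)
  also have "\<dots> = (f ^^ (k mod p)) x" using funpow_period[OF p(2)] by simp
  finally show "y \<in> (\<lambda>k. (f ^^ k) x) ` {..<p}" using y p by auto
qed auto

lemma row_iter: "1 \<le> k \<Longrightarrow> m + k \<le> n \<Longrightarrow> (row n ^^ m) {1..k} = {1+m..k+m}"
proof (induction m)
  case 0 then show ?case by simp
next
  case (Suc m)
  then show ?case using row_mid[of "1+m" "k+m" n] by simp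
qed

definition g :: "nat \<Rightarrow> nat \<Rightarrow> nat \<Rightarrow> nat set" where
  "g n k m = (if m \<le> n - k then {1+m..k+m} else {m-(n-k)..m-1})"

lemma row_iter_g: assumes "1 \<le> k" "k < n" "m < n + 2"
  shows "(row n ^^ m) {1..k} = g n k m"
proof (cases "m \<le> n - k")
  case True then show ?thesis using row_iter[of k m n] assms by (simp add: g_def)
next
  case False
  define p where "p = m - (n - k + 1)"
  have p: "m = (n - k) + 1 + p" "p \<le> k" using assms False unfolding p_def by auto
  have a: "(row n ^^ (n - k)) {1..k} = {1+(n-k)..n}" using row_iter[of k "n-k" n] assms by simp
  have b: "row n {1+(n-k)..n} = {1..n-k}" using row_topint[of "1+(n-k)" n] assms by simp
  have c: "(row n ^^ p) {1..n-k} = {1+p..(n-k)+p}" using row_iter[of "n-k" p n] assms p by simp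
  have "(row n ^^ m) {1..k} = (row n ^^ p) (row n ((row n ^^ (n - k)) {1..k}))"
  proof -
    have "m = p + Suc (n - k)" using p by simp
    then show ?thesis by (simp only: funpow_add funpow.simps comp_apply)
  qed
  also have "\<dots> = {1+p..(n-k)+p}" using a b c by simp
  finally show ?thesis using False p by (simp add: g_def)
qed

lemma row_period: assumes "1 \<le> k" "k < n"
  shows "(row n ^^ (n+2)) {1..k} = {1..k}"
proof -
  have "(row n ^^ (n+2)) {1..k} = row n ((row n ^^ (n+1)) {1..k})" by simp
  also have "(row n ^^ (n+1)) {1..k} = {k+1..n}" using row_iter_g[of k n "n+1"] assms by (simp add: g_def)
  also have "row n {k+1..n} = {1..k}" using row_topint[of "k+1" n] assms by simp
  finally show ?thesis .
qed

lemma orbit_k: assumes "1 \<le> k" "k < n"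
  shows "row_orbit n {1..k} = (\<lambda>s. {s..s+(k-1)}) ` {1..n-k+1} \<union> (\<lambda>s. {s..s+(n-k-1)}) ` {1..k+1}"
proof -
  have "row_orbit n {1..k} = (\<lambda>m. (row n ^^ m) {1..k}) ` {..<n+2}"
    unfolding row_orbit_def by (rule orbit_period) (use row_period assms in auto)
  also have "\<dots> = g n k ` {..<n+2}" using row_iter_g assms by (intro image_cong) auto
  also have "\<dots> = (\<lambda>s. {s..s+(k-1)}) ` {1..n-k+1} \<union> (\<lambda>s. {s..s+(n-k-1)}) ` {1..k+1}"
  proof (intro equalityI subsetI)
    fix y assume "y \<in> g n k ` {..<n+2}"
    then obtain m where m: "m < n+2" "y = g n k m" by auto
    show "y \<in> (\<lambda>s. {s..s+(k-1)}) ` {1..n-k+1} \<union> (\<lambda>s. {s..s+(n-k-1)}) ` {1..k+1}"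
    proof (cases "m \<le> n - k")
      case True
      then have "y = {1+m..(1+m)+(k-1)}" using m assms by (simp add: g_def)
      then show ?thesis using True by auto
    next
      case False
      then have "y = {m-(n-k)..(m-(n-k))+(n-k-1)}" using m assms by (simp add: g_def)
      moreover have "m-(n-k) \<in> {1..k+1}" using False m by auto
      ultimately show ?thesis by blast
    qed
  next
    fix y assume "y \<in> (\<lambda>s. {s..s+(k-1)}) ` {1..n-k+1} \<union> (\<lambda>s. {s..s+(n-k-1)}) ` {1..k+1}"
    then show "y \<in> g n k ` {..<n+2}"
    proof
      assume "y \<in> (\<lambda>s. {s..s+(k-1)}) ` {1..n-k+1}"
      then obtain s where s: "s \<in> {1..n-k+1}" "y = {s..s+(k-1)}" by auto
      have "g n k (s - 1) = y" using s assms by (auto simp: g_def)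
      moreover have "s - 1 < n + 2" using s by auto
      ultimately show ?thesis by blast
    next
      assume "y \<in> (\<lambda>s. {s..s+(n-k-1)}) ` {1..k+1}"
      then obtain s where s: "s \<in> {1..k+1}" "y = {s..s+(n-k-1)}" by auto
      have "g n k (s + (n - k)) = y" using s assms by (auto simp: g_def)
      moreover have "s + (n - k) < n + 2" using s assms by auto
      ultimately show ?thesis by blast
    qed
  qed
  finally show ?thesis .
qed

lemma inj_Icc: "inj_on (\<lambda>s::nat. {s..s+c}) A"
  by (auto simp: inj_on_def Icc_eq_Icc)

lemma card_fam: "card ((\<lambda>s::nat. {s..s+c}) ` {1..m}) = m"
  by (simp add: card_image[OF inj_Icc])

lemma sum_fam: "(\<Sum>J\<in>(\<lambda>s::nat. {s..s+c}) ` {1..m}. real (card J)) = real m * real (c+1)"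
  by (simp add: sum.reindex[OF inj_Icc])


lemma orbit_empty: assumes "1 \<le> n" shows "row_orbit n {} = {{}, {1..n}}"
proof -
  have r1: "row n {} = {1..n}" using row_empty assms by simp
  have r2: "row n {1..n} = {}" using row_topint[of 1 n] assms by simp
  have "row_orbit n {} = (\<lambda>m. (row n ^^ m) {}) ` {..<2}"
    unfolding row_orbit_def by (rule orbit_period) (use r1 r2 in \<open>auto simp: numeral_2_eq_2\<close>)
  also have "{..<2::nat} = {0,1}" by auto
  finally show ?thesis using r1 by simp
qed

lemma avg_empty: assumes "1 \<le> n" shows "orbit_avg n (\<lambda>I. real (card I)) {} = real n / 2"
proof -
  have ne: "{} \<noteq> {1..n}" using assms by auto
  show ?thesis unfolding orbit_avg_def orbit_empty[OF assms] using ne by simp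
qed

lemma avg_k: assumes "1 \<le> k" "2 * k < n"
  shows "card (row_orbit n {1..k}) = n + 2
        \<and> orbit_avg n (\<lambda>I. real (card I)) {1..k}
            = (2 * real k * (real n - real k) + real n) / (real n + 2)"
proof -
  let ?A = "(\<lambda>s. {s..s+(k-1)}) ` {1..n-k+1}"
  let ?B = "(\<lambda>s. {s..s+(n-k-1)}) ` {1..k+1}"
  have o: "row_orbit n {1..k} = ?A \<union> ?B" using orbit_k assms by simp
  have d: "?A \<inter> ?B = {}"
  proof (rule ccontr)
    assume "?A \<inter> ?B \<noteq> {}"
    then obtain s t where "{s..s+(k-1)} = {t..t+(n-k-1)}" by auto
    then have "card {s..s+(k-1)} = card {t..t+(n-k-1)}" by simp
    then show False using assms by simp
  qed
  have cA: "card ?A = n-k+1" by (rule card_fam)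
  have cB: "card ?B = k+1" by (rule card_fam)
  have c: "card (row_orbit n {1..k}) = n + 2"
    unfolding o using card_Un_disjoint[OF _ _ d] cA cB assms by simp
  have sA: "(\<Sum>J\<in>?A. real (card J)) = real (n-k+1) * real (k-1+1)" by (rule sum_fam)
  have sB: "(\<Sum>J\<in>?B. real (card J)) = real (k+1) * real (n-k-1+1)" by (rule sum_fam)
  have s: "(\<Sum>J\<in>row_orbit n {1..k}. real (card J)) = real (n-k+1) * real k + real (k+1) * real (n-k)"
    unfolding o using sum.union_disjoint[OF _ _ d, of "\<lambda>J. real (card J)"] sA sB assms by simp
  have kn: "real (n - k) = real n - real k" using assms by (simp add: of_nat_diff)
  have kn1: "real (n - k + 1) = real n - real k + 1" using assms by (simp add: of_nat_diff)
  show ?thesis using c s kn kn1 unfolding orbit_avg_def by (simp add: algebra_simps)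
qed

lemma avg_half: assumes "even n" "n \<ge> 2"
  shows "card (row_orbit n {1..n div 2}) = (n + 2) div 2
        \<and> orbit_avg n (\<lambda>I. real (card I)) {1..n div 2} = real n / 2"
proof -
  define k where "k = n div 2"
  have nk: "n = 2 * k" using assms unfolding k_def by simp
  have k1: "1 \<le> k" using assms nk by simp
  let ?A = "(\<lambda>s. {s..s+(k-1)}) ` {1..k+1}"
  have o: "row_orbit n {1..k} = ?A" using orbit_k[of k n] k1 nk
    by (simp add: numeral_2_eq_2)
  have c: "card ?A = k+1" by (rule card_fam)
  have s: "(\<Sum>J\<in>?A. real (card J)) = real (k+1) * real (k-1+1)" by (rule sum_fam)
  show ?thesis unfolding k_def[symmetric] orbit_avg_def o using c s k1 nk by simp
qed

theorem proposition3p14: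
  fixes n :: nat
  assumes "n \<ge> 3"
  shows "\<not> homomesic n (\<lambda>I. real (card I))
    \<and> row_orbit n {} = {{}, {1..n}}
    \<and> orbit_avg n (\<lambda>I. real (card I)) {} = real n / 2
    \<and> (\<forall>k::nat. 1 \<le> k \<and> 2 * k < n \<longrightarrow>
          card (row_orbit n {1..k}) = n + 2
        \<and> orbit_avg n (\<lambda>I. real (card I)) {1..k}
            = (2 * real k * (real n - real k) + real n) / (real n + 2))
    \<and> (even n \<longrightarrow>
          card (row_orbit n {1..n div 2}) = (n + 2) div 2
        \<and> orbit_avg n (\<lambda>I. real (card I)) {1..n div 2} = real n / 2)"
proof -
  have n1: "1 \<le> n" using assms by simp
  have nh: "\<not> homomesic n (\<lambda>I. real (card I))"
  proof
    assume "homomesic n (\<lambda>I. real (card I))"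
    then obtain c where c: "\<forall>I\<in>IC n. orbit_avg n (\<lambda>I. real (card I)) I = c"
      unfolding homomesic_def by blast
    have e: "real n / 2 = c" using c IC_empty avg_empty[OF n1] by metis
    have "orbit_avg n (\<lambda>I. real (card I)) {1..1} = c" using c IC_Icc[of 1 1 n] n1 by blast
    then have "(2 * real 1 * (real n - real 1) + real n) / (real n + 2) = real n / 2"
      using avg_k[of 1 n] assms e by simp
    then have "(2 * (real n - 1) + real n) * 2 = real n * (real n + 2)"
      by (simp add: field_simps)
    then have "(real n - 2) ^ 2 = 0" by (simp add: algebra_simps power2_eq_square)
    then show False using assms by simp
  qed
  show ?thesis using nh orbit_empty[OF n1] avg_empty[OF n1] avg_k avg_half assms by simp
qed

end
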